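(* Let $\varepsilon\in(0,3)$. There exists $n_0$ (depending on $\varepsilon$) such that for every $n\ge n_0$ and every real normed space $X$ of dimension $n$ there exists an approximately convex set $A\subseteq X$ with $$\mathcal{H}(A,\operatorname{Co}(A))\ge\log_2 n-\varepsilon\qquad\text{and}\qquad \operatorname{diam}(A)\le \frac{25}{\varepsilon}(\log_2 n)^2\, d(X,\ell_1^n).$$
   Context: A set $A$ is approximately convex if $d(tx+(1-t)y,A)\le1$ for all $x,y\in A$, $t\in[0,1]$, where $d(x,A)=\inf_{a\in A}\|x-a\|$. $\mathcal{H}$ is the Hausdorff distance, $\operatorname{Co}$ the convex hull, $\operatorname{diam}(A)=\sup\{\|x-y\|:x,y\in A\}$. $d(X,Y)=\inf\{\|T\|\|T^{-1}\|: T:X\to Y \text{ a linear isomorphism}\}$ is the Banach–Mazur distance, and $\ell_1^n$ is $\mathbb{R}^n$ with the norm $\sum|a_i|$. *)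

theory Defs
  imports "HOL-Analysis.Analysis"
begin

text \<open>An n-dimensional real normed space is modelled (up to isometry) as
  R^n = V n, the functions nat => real vanishing outside {0..<n}, equipped
  with an arbitrary norm N.\<close>

definition V :: "nat \<Rightarrow> (nat \<Rightarrow> real) set" where
  "V n = {x. \<forall>i\<ge>n. x i = 0}"

definition is_norm_on :: "nat \<Rightarrow> ((nat \<Rightarrow> real) \<Rightarrow> real) \<Rightarrow> bool" where
  "is_norm_on n N \<longleftrightarrow>
     (\<forall>x\<in>V n. 0 \<le> N x) \<and>
     (\<forall>x\<in>V n. N x = 0 \<longleftrightarrow> x = (\<lambda>_. 0)) \<and>
     (\<forall>x\<in>V n. \<forall>c. N (\<lambda>i. c * x i) = \<bar>c\<bar> * N x) \<and>
     (\<forall>x\<in>V n. \<forall>y\<in>V n. N (\<lambda>i. x i + y i) \<le> N x + N y)"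

definition l1norm :: "nat \<Rightarrow> (nat \<Rightarrow> real) \<Rightarrow> real" where
  "l1norm n x = (\<Sum>i<n. \<bar>x i\<bar>)"

definition linear_on :: "nat \<Rightarrow> ((nat \<Rightarrow> real) \<Rightarrow> (nat \<Rightarrow> real)) \<Rightarrow> bool" where
  "linear_on n T \<longleftrightarrow> T ` V n \<subseteq> V n \<and>
     (\<forall>x\<in>V n. \<forall>y\<in>V n. T (\<lambda>i. x i + y i) = (\<lambda>i. T x i + T y i)) \<and>
     (\<forall>x\<in>V n. \<forall>c. T (\<lambda>i. c * x i) = (\<lambda>i. c * T x i))"

definition opnorm :: "nat \<Rightarrow> ((nat \<Rightarrow> real) \<Rightarrow> real) \<Rightarrow> ((nat \<Rightarrow> real) \<Rightarrow> real)
     \<Rightarrow> ((nat \<Rightarrow> real) \<Rightarrow> (nat \<Rightarrow> real)) \<Rightarrow> real" where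
  "opnorm n N1 N2 T = Sup {N2 (T x) | x. x \<in> V n \<and> N1 x \<le> 1}"

definition bm_dist_l1 :: "nat \<Rightarrow> ((nat \<Rightarrow> real) \<Rightarrow> real) \<Rightarrow> real" where
  "bm_dist_l1 n N = Inf {opnorm n N (l1norm n) T * opnorm n (l1norm n) N (inv_into (V n) T) | T.
       linear_on n T \<and> bij_betw T (V n) (V n)}"

definition setdist_N :: "((nat \<Rightarrow> real) \<Rightarrow> real) \<Rightarrow> (nat \<Rightarrow> real) \<Rightarrow> (nat \<Rightarrow> real) set \<Rightarrow> real" where
  "setdist_N N z A = Inf {N (\<lambda>i. z i - a i) | a. a \<in> A}"

definition approx_convex :: "((nat \<Rightarrow> real) \<Rightarrow> real) \<Rightarrow> (nat \<Rightarrow> real) set \<Rightarrow> bool" where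
  "approx_convex N A \<longleftrightarrow> (\<forall>x\<in>A. \<forall>y\<in>A. \<forall>t::real. 0 \<le> t \<and> t \<le> 1 \<longrightarrow>
      setdist_N N (\<lambda>i. t * x i + (1 - t) * y i) A \<le> 1)"

definition conv_hull :: "(nat \<Rightarrow> real) set \<Rightarrow> (nat \<Rightarrow> real) set" where
  "conv_hull A = {y. \<exists>S c. finite S \<and> S \<noteq> {} \<and> S \<subseteq> A \<and> (\<forall>x\<in>S. 0 \<le> c x) \<and> sum c S = 1 \<and>
      y = (\<lambda>j. \<Sum>x\<in>S. c x * x j)}"

definition esetdist_N :: "((nat \<Rightarrow> real) \<Rightarrow> real) \<Rightarrow> (nat \<Rightarrow> real) \<Rightarrow> (nat \<Rightarrow> real) set \<Rightarrow> ereal" where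
  "esetdist_N N z A = (INF a\<in>A. ereal (N (\<lambda>i. z i - a i)))"

definition diam_N :: "((nat \<Rightarrow> real) \<Rightarrow> real) \<Rightarrow> (nat \<Rightarrow> real) set \<Rightarrow> ereal" where
  "diam_N N A = (SUP p\<in>A \<times> A. ereal (N (\<lambda>i. fst p i - snd p i)))"

definition hausdorff_N :: "((nat \<Rightarrow> real) \<Rightarrow> real) \<Rightarrow> (nat \<Rightarrow> real) set \<Rightarrow> (nat \<Rightarrow> real) set \<Rightarrow> ereal" where
  "hausdorff_N N A B = max (SUP a\<in>A. esetdist_N N a B) (SUP b\<in>B. esetdist_N N b A)"

end

theory Submission
  imports Defs
begin


definition ev :: "nat \<Rightarrow> nat \<Rightarrow> real" where "ev k = (\<lambda>i. if i = k then 1 else 0)"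

lemma V_add: "x \<in> V n \<Longrightarrow> y \<in> V n \<Longrightarrow> (\<lambda>i. x i + y i) \<in> V n" by (simp add: V_def)
lemma V_diff: "x \<in> V n \<Longrightarrow> y \<in> V n \<Longrightarrow> (\<lambda>i. x i - y i) \<in> V n" by (simp add: V_def)
lemma V_scale: "x \<in> V n \<Longrightarrow> (\<lambda>i. c * x i) \<in> V n" by (simp add: V_def)
lemma V_zero: "(\<lambda>i. 0) \<in> V n" by (simp add: V_def)
lemma V_ev: "k < n \<Longrightarrow> ev k \<in> V n" by (simp add: V_def ev_def)
lemma V_mono: "m \<le> n \<Longrightarrow> x \<in> V m \<Longrightarrow> x \<in> V n" by (simp add: V_def)
lemma V_sum: "(\<And>k. k \<in> F \<Longrightarrow> f k \<in> V n) \<Longrightarrow> (\<lambda>i. \<Sum>k\<in>F. f k i) \<in> V n"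
  by (auto simp: V_def intro!: sum.neutral)

definition seminorm_on :: "nat \<Rightarrow> ((nat \<Rightarrow> real) \<Rightarrow> real) \<Rightarrow> bool" where
  "seminorm_on n N \<longleftrightarrow>
     (\<forall>x\<in>V n. \<forall>c. N (\<lambda>i. c * x i) = \<bar>c\<bar> * N x) \<and>
     (\<forall>x\<in>V n. \<forall>y\<in>V n. N (\<lambda>i. x i + y i) \<le> N x + N y)"

lemma norm_semi: "is_norm_on n N \<Longrightarrow> seminorm_on n N"
  by (simp add: is_norm_on_def seminorm_on_def)

lemma semi_scale: "seminorm_on n N \<Longrightarrow> x \<in> V n \<Longrightarrow> N (\<lambda>i. c * x i) = \<bar>c\<bar> * N x"
  by (simp add: seminorm_on_def)
lemma semi_add: "seminorm_on n N \<Longrightarrow> x \<in> V n \<Longrightarrow> y \<in> V n \<Longrightarrow> N (\<lambda>i. x i + y i) \<le> N x + N y"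
  by (simp add: seminorm_on_def)
lemma semi_zero: "seminorm_on n N \<Longrightarrow> N (\<lambda>i. 0) = 0"
  using semi_scale[of n N "\<lambda>i. 0" 0] by (simp add: V_zero)
lemma semi_neg: "seminorm_on n N \<Longrightarrow> x \<in> V n \<Longrightarrow> N (\<lambda>i. - x i) = N x"
  using semi_scale[of n N x "-1"] by simp
lemma semi_nonneg: "seminorm_on n N \<Longrightarrow> x \<in> V n \<Longrightarrow> 0 \<le> N x"
proof -
  assume a: "seminorm_on n N" "x \<in> V n"
  have "N (\<lambda>i. x i + - x i) \<le> N x + N (\<lambda>i. - x i)"
    using semi_add[OF a(1) a(2), of "\<lambda>i. - x i"] a by (simp add: V_def)
  then show ?thesis using semi_zero[OF a(1)] semi_neg[OF a] by simp
qed
lemma semi_diff: "seminorm_on n N \<Longrightarrow> x \<in> V n \<Longrightarrow> y \<in> V n \<Longrightarrow> N (\<lambda>i. x i - y i) \<le> N x + N y"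
  using semi_add[of n N x "\<lambda>i. - y i"] semi_neg[of n N y] by (simp add: V_def)
lemma semi_rev: "seminorm_on n N \<Longrightarrow> x \<in> V n \<Longrightarrow> y \<in> V n \<Longrightarrow> N x - N y \<le> N (\<lambda>i. x i - y i)"
  using semi_add[of n N "\<lambda>i. x i - y i" y] by (simp add: V_def)
lemma semi_rev2: "seminorm_on n N \<Longrightarrow> x \<in> V n \<Longrightarrow> y \<in> V n \<Longrightarrow> N x - N y \<le> N (\<lambda>i. x i + y i)"
  using semi_rev[of n N x "\<lambda>i. - y i"] semi_neg[of n N y] by (simp add: V_def)
lemma semi_absdiff: "seminorm_on n N \<Longrightarrow> x \<in> V n \<Longrightarrow> y \<in> V n \<Longrightarrow> \<bar>N x - N y\<bar> \<le> N (\<lambda>i. x i - y i)"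
proof -
  assume a: "seminorm_on n N" "x \<in> V n" "y \<in> V n"
  have "N y - N x \<le> N (\<lambda>i. y i - x i)" using semi_rev a by blast
  also have "N (\<lambda>i. y i - x i) = N (\<lambda>i. - (x i - y i))" by simp
  also have "\<dots> = N (\<lambda>i. x i - y i)" using semi_neg[OF a(1), of "\<lambda>i. x i - y i"] a by (simp add: V_diff)
  finally show ?thesis using semi_rev[OF a] by linarith
qed

lemma semi_sum: assumes sn: "seminorm_on n N" shows "finite F \<Longrightarrow> (\<And>k. k \<in> F \<Longrightarrow> f k \<in> V n) \<Longrightarrow>
   N (\<lambda>i. \<Sum>k\<in>F. f k i) \<le> (\<Sum>k\<in>F. N (f k))"
proof (induction F rule: finite_induct)
  case empty then show ?case using semi_zero[OF sn] by simp
next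
  case (insert a F)
  have "N (\<lambda>i. \<Sum>k\<in>insert a F. f k i) = N (\<lambda>i. f a i + (\<Sum>k\<in>F. f k i))"
    using insert by simp
  also have "\<dots> \<le> N (f a) + N (\<lambda>i. \<Sum>k\<in>F. f k i)"
    using semi_add[OF sn, of "f a" "\<lambda>i. \<Sum>k\<in>F. f k i"] insert(4) V_sum[of F f n] by auto
  also have "\<dots> \<le> N (f a) + (\<Sum>k\<in>F. N (f k))" using insert by auto
  finally show ?case using insert by simp
qed

lemma V_expand: "x \<in> V n \<Longrightarrow> x = (\<lambda>i. \<Sum>k<n. x k * ev k i)"
proof
  fix i assume "x \<in> V n"
  show "x i = (\<Sum>k<n. x k * ev k i)"
  proof (cases "i < n")
    case True then show ?thesis by (simp add: ev_def if_distrib sum.delta cong: if_cong)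
  next
    case False then show ?thesis using \<open>x \<in> V n\<close> by (simp add: ev_def V_def)
  qed
qed

lemma semi_basis_bound: "seminorm_on n N \<Longrightarrow> x \<in> V n \<Longrightarrow> N x \<le> (\<Sum>k<n. \<bar>x k\<bar> * N (ev k))"
proof -
  assume a: "seminorm_on n N" "x \<in> V n"
  have "N x = N (\<lambda>i. \<Sum>k<n. x k * ev k i)" using V_expand[OF a(2)] by simp
  also have "\<dots> \<le> (\<Sum>k<n. N (\<lambda>i. x k * ev k i))"
    using semi_sum[OF a(1), of "{..<n}" "\<lambda>k i. x k * ev k i"] by (simp add: V_scale V_ev)
  also have "\<dots> = (\<Sum>k<n. \<bar>x k\<bar> * N (ev k))"
    using semi_scale[OF a(1)] V_ev by simp
  finally show ?thesis .
qed

definition Mb :: "nat \<Rightarrow> ((nat \<Rightarrow> real) \<Rightarrow> real) \<Rightarrow> real" where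
  "Mb n N = (\<Sum>k<n. \<bar>N (ev k)\<bar>) + 1"

lemma Mb_pos: "0 < Mb n N" unfolding Mb_def by (simp add: sum_nonneg add_nonneg_pos)

lemma semi_l1_bound: "seminorm_on n N \<Longrightarrow> x \<in> V n \<Longrightarrow> N x \<le> Mb n N * l1norm n x"
proof -
  assume a: "seminorm_on n N" "x \<in> V n"
  have "N x \<le> (\<Sum>k<n. \<bar>x k\<bar> * N (ev k))" using semi_basis_bound[OF a] .
  also have "\<dots> \<le> (\<Sum>k<n. \<bar>x k\<bar> * Mb n N)"
  proof (rule sum_mono)
    fix k assume "k \<in> {..<n}"
    then have "\<bar>N (ev k)\<bar> \<le> (\<Sum>k<n. \<bar>N (ev k)\<bar>)"
      by (intro member_le_sum) auto
    then have "N (ev k) \<le> Mb n N" unfolding Mb_def by linarith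
    then show "\<bar>x k\<bar> * N (ev k) \<le> \<bar>x k\<bar> * Mb n N" by (simp add: mult_left_mono)
  qed
  also have "\<dots> = Mb n N * l1norm n x" by (simp add: l1norm_def sum_distrib_left mult.commute)
  finally show ?thesis .
qed

lemma l1_semi: "seminorm_on n (l1norm n)"
  unfolding seminorm_on_def l1norm_def
  by (auto simp: abs_mult sum_distrib_left sum.distrib[symmetric] intro!: sum_mono abs_triangle_ineq)

lemma l1_nonneg: "0 \<le> l1norm n x" by (simp add: l1norm_def sum_nonneg)

lemma l1_zero: "x \<in> V n \<Longrightarrow> l1norm n x = 0 \<Longrightarrow> x = (\<lambda>i. 0)"
proof
  fix i assume a: "x \<in> V n" "l1norm n x = 0"
  show "x i = 0"
  proof (cases "i < n")
    case True
    have "\<bar>x i\<bar> \<le> l1norm n x" unfolding l1norm_def using True by (intro member_le_sum) auto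
    then show ?thesis using a by simp
  next
    case False then show ?thesis using a by (simp add: V_def)
  qed
qed

lemma l1_norm: "is_norm_on n (l1norm n)"
  using l1_semi[of n] l1_nonneg l1_zero unfolding is_norm_on_def seminorm_on_def
  by (auto simp: l1norm_def)

lemma l1_ev: "k < n \<Longrightarrow> l1norm n (ev k) = 1"
  by (simp add: l1norm_def ev_def if_distrib sum.delta cong: if_cong)



lemma box_compact: "compact {x::nat\<Rightarrow>real. \<forall>i. x i \<in> (if i < n then {-1..1} else {0})}"
proof -
  let ?S = "\<lambda>i::nat. (if i < n then {-1..1::real} else {0})"
  have "compactin (product_topology (\<lambda>i. euclidean) UNIV) (PiE UNIV ?S)"
    by (subst compactin_PiE) auto
  then have "compact (PiE UNIV ?S)" by (simp add: euclidean_product_topology)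
  moreover have "PiE UNIV ?S = {x. \<forall>i. x i \<in> ?S i}" by (auto simp: PiE_def Pi_def)
  ultimately show ?thesis by simp
qed

lemma l1_cont: "continuous_on UNIV (\<lambda>x::nat\<Rightarrow>real. l1norm n x)"
  unfolding l1norm_def by (intro continuous_intros continuous_on_product_coordinates)

lemma N_cont:
  assumes sn: "seminorm_on n N" and K: "K \<subseteq> V n"
  shows "continuous_on K N"
  unfolding continuous_on_topological
proof (intro ballI allI impI)
  fix x B assume x: "x \<in> K" and B: "open B" "N x \<in> B"
  obtain e where e0: "e > 0" "ball (N x) e \<subseteq> B"
    using B openE by blast
  have e: "e > 0" "\<And>y. dist y (N x) < e \<Longrightarrow> y \<in> B"
    using e0 by (auto simp: dist_commute)
  define \<delta> where "\<delta> = e / (Mb n N * (real n + 1))"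
  have dpos: "\<delta> > 0" unfolding \<delta>_def using e Mb_pos[of n N] by (simp add: add_pos_pos)
  let ?A = "{y::nat\<Rightarrow>real. \<forall>i\<in>{..<n}. y (id i) \<in> ball (x i) \<delta>}"
  have "open ?A" by (rule product_topology_basis'[of "{..<n}" "\<lambda>i. ball (x i) \<delta>" id]) auto
  moreover have "x \<in> ?A" using dpos by (simp add: dist_real_def)
  moreover have "N y \<in> B" if y: "y \<in> K" "y \<in> ?A" for y
  proof -
    have xy: "x \<in> V n" "y \<in> V n" using K x y by auto
    have "\<bar>N y - N x\<bar> \<le> N (\<lambda>i. y i - x i)" using semi_absdiff[OF sn xy(2) xy(1)] .
    also have "\<dots> \<le> Mb n N * l1norm n (\<lambda>i. y i - x i)" using semi_l1_bound[OF sn V_diff[OF xy(2) xy(1)]] .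
    also have "l1norm n (\<lambda>i. y i - x i) \<le> (\<Sum>i<n. \<delta>)"
      unfolding l1norm_def
    proof (rule sum_mono)
      fix i assume "i \<in> {..<n}"
      then have "dist (x i) (y i) < \<delta>" using y(2) by auto
      then show "\<bar>y i - x i\<bar> \<le> \<delta>" by (simp add: dist_real_def)
    qed
    then have "Mb n N * l1norm n (\<lambda>i. y i - x i) \<le> Mb n N * (real n * \<delta>)"
      using Mb_pos[of n N] by (intro mult_left_mono) auto
    also have "\<dots> < e"
    proof -
      have h1: "Mb n N * (real n + 1) * \<delta> = e" unfolding \<delta>_def using Mb_pos[of n N] by simp
      have "Mb n N * (real n * \<delta>) < Mb n N * (real n + 1) * \<delta>" using Mb_pos[of n N] dpos by simp
      then show ?thesis using h1 by simp
    qed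
    finally show ?thesis using e(2)[of "N y"] by (simp add: dist_real_def)
  qed
  ultimately show "\<exists>A. open A \<and> x \<in> A \<and> (\<forall>y\<in>K. y \<in> A \<longrightarrow> N y \<in> B)" by blast
qed

lemma norm_lower:
  assumes nN: "is_norm_on n N" and n: "0 < n"
  shows "\<exists>c>0. \<forall>x\<in>V n. c * l1norm n x \<le> N x"
proof -
  have sn: "seminorm_on n N" using norm_semi[OF nN] .
  define K where "K = {x::nat\<Rightarrow>real. \<forall>i. x i \<in> (if i < n then {-1..1} else {0})} \<inter> {x. l1norm n x = 1}"
  have clo: "closed {x::nat\<Rightarrow>real. l1norm n x = 1}"
    by (rule closed_Collect_eq[OF l1_cont continuous_on_const])
  have cK: "compact K" unfolding K_def
    by (rule compact_Int_closed[OF box_compact clo])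
  have KV: "K \<subseteq> V n"
  proof
    fix x assume "x \<in> K"
    then have "\<forall>i. x i \<in> (if i < n then {-1..1} else {0})" unfolding K_def by blast
    then have "x i = 0" if "i \<ge> n" for i using that by (metis not_le singletonD)
    then show "x \<in> V n" unfolding V_def by blast
  qed
  have "ev 0 \<in> K" unfolding K_def using n l1_ev[of 0 n] by (auto simp: ev_def)
  then have Kne: "K \<noteq> {}" by auto
  obtain x0 where x0: "x0 \<in> K" "\<And>y. y \<in> K \<Longrightarrow> N x0 \<le> N y"
    using continuous_attains_inf[OF cK Kne N_cont[OF sn KV]] by blast
  have l1x0: "l1norm n x0 = 1" using x0(1) unfolding K_def by blast
  have "x0 \<noteq> (\<lambda>i. 0)"
  proof
    assume "x0 = (\<lambda>i. 0)"
    then have "l1norm n x0 = 0" by (simp add: l1norm_def)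
    then show False using l1x0 by simp
  qed
  moreover have "x0 \<in> V n" using x0(1) KV by blast
  moreover have "\<forall>x\<in>V n. N x = 0 \<longleftrightarrow> x = (\<lambda>_. 0)" "\<forall>x\<in>V n. 0 \<le> N x"
    using nN unfolding is_norm_on_def by blast+
  ultimately have c: "N x0 > 0" by (metis less_eq_real_def)
  have "N x0 * l1norm n x \<le> N x" if x: "x \<in> V n" for x
  proof (cases "l1norm n x = 0")
    case True then show ?thesis using nN x unfolding is_norm_on_def by auto
  next
    case False
    let ?l = "l1norm n x"
    have lp: "?l > 0" using False l1_nonneg[of n x] by auto
    let ?y = "\<lambda>i. (1 / ?l) * x i"
    have "?y \<in> K"
    proof -
      have xb: "\<bar>x i\<bar> \<le> ?l" if "i < n" for i unfolding l1norm_def using that by (intro member_le_sum) auto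
      have l1y: "l1norm n ?y = 1" using semi_scale[OF l1_semi x, of "1/?l"] lp by simp
      have "?y i \<in> {-1..1}" if "i < n" for i
      proof -
        have "-?l \<le> x i \<and> x i \<le> ?l" using xb[OF that] by (simp add: abs_le_iff)
        then show ?thesis using lp by (simp add: field_simps)
      qed
      moreover have "?y i \<in> {0}" if "\<not> i < n" for i using x that by (simp add: V_def)
      ultimately have "\<forall>i. ?y i \<in> (if i < n then {-1..1} else {0})" by presburger
      then show ?thesis unfolding K_def using l1y by blast
    qed
    then have "N x0 \<le> N ?y" using x0(2) by blast
    also have "N ?y = N x / ?l" using semi_scale[OF sn x, of "1/?l"] lp by simp
    finally show ?thesis using lp by (simp add: field_simps)
  qed
  then show ?thesis using c by blast
qed



lemma lin_V: "linear_on n T \<Longrightarrow> x \<in> V n \<Longrightarrow> T x \<in> V n" by (auto simp: linear_on_def)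
lemma lin_add: "linear_on n T \<Longrightarrow> x \<in> V n \<Longrightarrow> y \<in> V n \<Longrightarrow> T (\<lambda>i. x i + y i) = (\<lambda>i. T x i + T y i)"
  by (simp add: linear_on_def)
lemma lin_scale: "linear_on n T \<Longrightarrow> x \<in> V n \<Longrightarrow> T (\<lambda>i. c * x i) = (\<lambda>i. c * T x i)"
  by (simp add: linear_on_def)
lemma lin_zero: "linear_on n T \<Longrightarrow> T (\<lambda>i. 0) = (\<lambda>i. 0)"
  using lin_scale[of n T "\<lambda>i. 0" 0] by (simp add: V_zero)
lemma lin_diff: "linear_on n T \<Longrightarrow> x \<in> V n \<Longrightarrow> y \<in> V n \<Longrightarrow> T (\<lambda>i. x i - y i) = (\<lambda>i. T x i - T y i)"
proof -
  assume a: "linear_on n T" "x \<in> V n" "y \<in> V n"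
  have "T (\<lambda>i. x i - y i) = T (\<lambda>i. x i + (-1) * y i)" by simp
  also have "\<dots> = (\<lambda>i. T x i + T (\<lambda>i. (-1) * y i) i)" using lin_add[OF a(1,2) V_scale[OF a(3)]] .
  also have "\<dots> = (\<lambda>i. T x i - T y i)" using lin_scale[OF a(1,3), of "-1"] by simp
  finally show ?thesis .
qed
lemma lin_comb: "linear_on n T \<Longrightarrow> x \<in> V n \<Longrightarrow> y \<in> V n \<Longrightarrow>
   T (\<lambda>i. a * x i + b * y i) = (\<lambda>i. a * T x i + b * T y i)"
  using lin_add[of n T "\<lambda>i. a * x i" "\<lambda>i. b * y i"] lin_scale[of n T x a] lin_scale[of n T y b]
  by (simp add: V_scale)

lemma lin_sum: assumes T: "linear_on n T" shows "finite F \<Longrightarrow> (\<And>k. k \<in> F \<Longrightarrow> f k \<in> V n) \<Longrightarrow>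
   T (\<lambda>i. \<Sum>k\<in>F. f k i) = (\<lambda>i. \<Sum>k\<in>F. T (f k) i)"
proof (induction F rule: finite_induct)
  case empty then show ?case using lin_zero[OF T] by simp
next
  case (insert a F)
  have "T (\<lambda>i. \<Sum>k\<in>insert a F. f k i) = T (\<lambda>i. f a i + (\<Sum>k\<in>F. f k i))"
    using insert by simp
  also have "\<dots> = (\<lambda>i. T (f a) i + T (\<lambda>i. \<Sum>k\<in>F. f k i) i)"
    using lin_add[OF T, of "f a" "\<lambda>i. \<Sum>k\<in>F. f k i"] insert(4) V_sum[of F f n] by auto
  also have "\<dots> = (\<lambda>i. T (f a) i + (\<Sum>k\<in>F. T (f k) i))" using insert by auto
  finally show ?case using insert by simp
qed

lemma semi_comp: "linear_on n T \<Longrightarrow> seminorm_on n N \<Longrightarrow> seminorm_on n (\<lambda>x. N (T x))"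
  unfolding seminorm_on_def by (auto simp: lin_add lin_scale lin_V)

lemma inv_props:
  assumes T: "linear_on n T" and B: "bij_betw T (V n) (V n)"
  shows "linear_on n (inv_into (V n) T)"
    and "\<And>y. y \<in> V n \<Longrightarrow> T (inv_into (V n) T y) = y"
    and "\<And>y. y \<in> V n \<Longrightarrow> inv_into (V n) T y \<in> V n"
proof -
  let ?S = "inv_into (V n) T"
  have inj: "inj_on T (V n)" using B bij_betw_def by blast
  show r: "\<And>y. y \<in> V n \<Longrightarrow> T (?S y) = y" using B by (simp add: bij_betw_inv_into_right)
  show m: "\<And>y. y \<in> V n \<Longrightarrow> ?S y \<in> V n" using B unfolding bij_betw_def by (metis inv_into_into)
  show "linear_on n ?S"
    unfolding linear_on_def
  proof (intro conjI ballI allI subsetI)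
    fix y assume "y \<in> ?S ` V n" then show "y \<in> V n" using m by blast
  next
    fix x y assume xy: "x \<in> V n" "y \<in> V n"
    have "T (\<lambda>i. ?S x i + ?S y i) = (\<lambda>i. x i + y i)" using lin_add[OF T m m] xy r by simp
    also have "\<dots> = T (?S (\<lambda>i. x i + y i))" using r[OF V_add[OF xy]] by simp
    finally have e: "T (?S (\<lambda>i. x i + y i)) = T (\<lambda>i. ?S x i + ?S y i)" by simp
    show "?S (\<lambda>i. x i + y i) = (\<lambda>i. ?S x i + ?S y i)"
      by (rule inj_onD[OF inj e m[OF V_add[OF xy]] V_add[OF m[OF xy(1)] m[OF xy(2)]]])
  next
    fix x c assume x: "x \<in> V n"
    have "T (\<lambda>i. c * ?S x i) = (\<lambda>i. c * x i)" using lin_scale[OF T m[OF x]] x r by simp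
    also have "\<dots> = T (?S (\<lambda>i. c * x i))" using r[OF V_scale[OF x]] by simp
    finally have e: "T (?S (\<lambda>i. c * x i)) = T (\<lambda>i. c * ?S x i)" by simp
    show "?S (\<lambda>i. c * x i) = (\<lambda>i. c * ?S x i)"
      by (rule inj_onD[OF inj e m[OF V_scale[OF x]] V_scale[OF m[OF x]]])
  qed
qed

lemma opnorm_gen:
  assumes F: "seminorm_on n F" and G: "is_norm_on n G" and bnd: "\<And>x. x \<in> V n \<Longrightarrow> F x \<le> B * G x"
  shows "0 \<le> Sup {F x |x. x \<in> V n \<and> G x \<le> 1}"
    and "\<And>x. x \<in> V n \<Longrightarrow> F x \<le> Sup {F x |x. x \<in> V n \<and> G x \<le> 1} * G x"
proof -
  let ?X = "{F x |x. x \<in> V n \<and> G x \<le> 1}"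
  have G0: "G (\<lambda>i. 0) = 0" using semi_zero[OF norm_semi[OF G]] .
  have F0: "F (\<lambda>i. 0) = 0" using semi_zero[OF F] .
  have "(\<lambda>i. 0::real) \<in> V n \<and> G (\<lambda>i. 0) \<le> 1" using V_zero G0 by simp
  then have "F (\<lambda>i. 0) \<in> ?X" by blast
  then have z: "0 \<in> ?X" using F0 by simp
  have Gnn: "\<And>x. x \<in> V n \<Longrightarrow> 0 \<le> G x" using G by (simp add: is_norm_on_def)
  have bdd: "bdd_above ?X"
  proof (rule bdd_aboveI)
    fix y assume "y \<in> ?X"
    then obtain x where x: "y = F x" "x \<in> V n" "G x \<le> 1" by blast
    have "F x \<le> B * G x" using bnd x by blast
    also have "\<dots> \<le> max B 0"
    proof (cases "B \<ge> 0")
      case True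
      have "B * G x \<le> B" using mult_left_le[OF x(3) True] .
      then show ?thesis by linarith
    next
      case False
      have "B * G x \<le> 0" using False Gnn[OF x(2)] by (simp add: mult_nonpos_nonneg)
      then show ?thesis by linarith
    qed
    finally show "y \<le> max B 0" using x by simp
  qed
  show S0: "0 \<le> Sup ?X" using cSup_upper[OF z bdd] .
  fix x assume x: "x \<in> V n"
  show "F x \<le> Sup ?X * G x"
  proof (cases "G x = 0")
    case True
    moreover have "\<forall>x\<in>V n. G x = 0 \<longleftrightarrow> x = (\<lambda>_. 0)" using G unfolding is_norm_on_def by blast
    ultimately have "x = (\<lambda>i. 0)" using x by blast
    then show ?thesis using F0 True by simp
  next
    case False
    then have gp: "G x > 0" using Gnn[OF x] by simp
    let ?y = "\<lambda>i. (1 / G x) * x i"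
    have "G ?y = 1" using semi_scale[OF norm_semi[OF G] x, of "1 / G x"] gp by simp
    then have Gy: "G ?y \<le> 1" by simp
    have Vy: "?y \<in> V n" by (rule V_scale[OF x])
    have "F ?y \<in> ?X" using Gy Vy by blast
    then have Fy: "F ?y \<le> Sup ?X" by (rule cSup_upper[OF _ bdd])
    have Feq: "F ?y = F x / G x" using semi_scale[OF F x, of "1 / G x"] gp by simp
    have "F x = G x * F ?y" using Feq gp by simp
    also have "\<dots> \<le> G x * Sup ?X" using Fy gp by (intro mult_left_mono) auto
    finally show ?thesis by (simp add: mult.commute)
  qed
qed

lemma l1_lin_bound: "linear_on n T \<Longrightarrow> x \<in> V n \<Longrightarrow> l1norm n (T x) \<le> Mb n (\<lambda>x. l1norm n (T x)) * l1norm n x"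
  using semi_l1_bound[OF semi_comp[OF _ l1_semi]] by blast

definition BMset :: "nat \<Rightarrow> ((nat \<Rightarrow> real) \<Rightarrow> real) \<Rightarrow> real set" where
  "BMset n N = {opnorm n N (l1norm n) T * opnorm n (l1norm n) N (inv_into (V n) T) | T.
       linear_on n T \<and> bij_betw T (V n) (V n)}"

lemma T_facts:
  assumes N: "is_norm_on n N" and n: "0 < n" and T: "linear_on n T" and B: "bij_betw T (V n) (V n)"
  defines "a \<equiv> opnorm n N (l1norm n) T" and "b \<equiv> opnorm n (l1norm n) N (inv_into (V n) T)"
  shows "0 \<le> a" "0 \<le> b" "\<And>x. x \<in> V n \<Longrightarrow> l1norm n (T x) \<le> a * N x"
    "\<And>y. y \<in> V n \<Longrightarrow> N (inv_into (V n) T y) \<le> b * l1norm n y" "1 \<le> a * b"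
proof -
  let ?S = "inv_into (V n) T"
  obtain c where c: "c > 0" "\<And>x. x \<in> V n \<Longrightarrow> c * l1norm n x \<le> N x" using norm_lower[OF N n] by blast
  have sn: "seminorm_on n N" using norm_semi[OF N] .
  have F1: "seminorm_on n (\<lambda>x. l1norm n (T x))" using semi_comp[OF T l1_semi] .
  have b1: "l1norm n (T x) \<le> (Mb n (\<lambda>x. l1norm n (T x)) / c) * N x" if x: "x \<in> V n" for x
  proof -
    have "l1norm n (T x) \<le> Mb n (\<lambda>x. l1norm n (T x)) * l1norm n x" using l1_lin_bound[OF T x] .
    also have "\<dots> \<le> Mb n (\<lambda>x. l1norm n (T x)) * (N x / c)"
      using c(2)[OF x] c(1) less_imp_le[OF Mb_pos[of n "(\<lambda>x. l1norm n (T x))"]] by (intro mult_left_mono) (auto simp: field_simps)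
    finally show ?thesis by simp
  qed
  have Sl: "linear_on n ?S" using inv_props(1)[OF T B] .
  have F2: "seminorm_on n (\<lambda>x. N (?S x))" using semi_comp[OF Sl sn] .
  have b2: "N (?S y) \<le> Mb n (\<lambda>x. N (?S x)) * l1norm n y" if "y \<in> V n" for y
    using semi_l1_bound[OF F2 that] .
  show "0 \<le> a" unfolding a_def opnorm_def using opnorm_gen(1)[OF F1 N b1] by blast
  show "0 \<le> b" unfolding b_def opnorm_def using opnorm_gen(1)[OF F2 l1_norm b2] by blast
  show A: "\<And>x. x \<in> V n \<Longrightarrow> l1norm n (T x) \<le> a * N x"
    unfolding a_def opnorm_def using opnorm_gen(2)[OF F1 N b1] by blast
  show Bb: "\<And>y. y \<in> V n \<Longrightarrow> N (?S y) \<le> b * l1norm n y"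
    unfolding b_def opnorm_def using opnorm_gen(2)[OF F2 l1_norm b2] by blast
  have e0: "ev 0 \<in> V n" using V_ev n by blast
  have "1 = l1norm n (T (?S (ev 0)))" using inv_props(2)[OF T B e0] l1_ev n by simp
  also have "\<dots> \<le> a * N (?S (ev 0))" using A inv_props(3)[OF T B e0] by blast
  also have "\<dots> \<le> a * (b * l1norm n (ev 0))"
    using Bb[OF e0] \<open>0 \<le> a\<close> by (intro mult_left_mono) auto
  finally show "1 \<le> a * b" using l1_ev n by simp
qed

lemma bm_good:
  assumes N: "is_norm_on n N" and n: "0 < n" and th: "\<theta> > 0"
  shows "1 \<le> bm_dist_l1 n N"
    and "\<exists>L. linear_on n L \<and> (\<forall>c\<in>V n. N (L c) \<le> l1norm n c \<and> l1norm n c \<le> (bm_dist_l1 n N + \<theta>) * N (L c))"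
proof -
  have eq: "bm_dist_l1 n N = Inf (BMset n N)" unfolding bm_dist_l1_def BMset_def by (rule refl)
  have ge1: "1 \<le> z" if zin: "z \<in> BMset n N" for z
  proof -
    obtain T where T: "linear_on n T" "bij_betw T (V n) (V n)"
      and zT: "z = opnorm n N (l1norm n) T * opnorm n (l1norm n) N (inv_into (V n) T)"
      using zin unfolding BMset_def by blast
    show ?thesis unfolding zT by (rule T_facts(5)[OF N n T])
  qed
  have lin_id: "linear_on n id" by (simp add: linear_on_def)
  have "bij_betw id (V n) (V n)" by simp
  then have ne: "BMset n N \<noteq> {}" unfolding BMset_def using lin_id by blast
  show "1 \<le> bm_dist_l1 n N" unfolding eq using ge1 ne by (intro cInf_greatest) auto
  have "Inf (BMset n N) < bm_dist_l1 n N + \<theta>" using eq th by simp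
  then obtain z where z: "z \<in> BMset n N" "z < bm_dist_l1 n N + \<theta>" using cInf_lessD[OF ne] by blast
  then obtain T where T: "linear_on n T" "bij_betw T (V n) (V n)"
    and zT: "z = opnorm n N (l1norm n) T * opnorm n (l1norm n) N (inv_into (V n) T)"
    unfolding BMset_def by blast
  let ?S = "inv_into (V n) T"
  let ?a = "opnorm n N (l1norm n) T" and ?b = "opnorm n (l1norm n) N ?S"
  note f = T_facts[OF N n T]
  have bpos: "?b > 0"
  proof (rule ccontr)
    assume "\<not> ?b > 0"
    then have "?b = 0" using f(2) by linarith
    then show False using f(5) by simp
  qed
  define L where "L = (\<lambda>c. \<lambda>i. (1 / ?b) * ?S c i)"
  have Sl: "linear_on n ?S" using inv_props(1)[OF T] .
  have Ll: "linear_on n L"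
    unfolding linear_on_def L_def
  proof (intro conjI ballI allI subsetI)
    fix y assume "y \<in> (\<lambda>c i. 1 / ?b * ?S c i) ` V n"
    then obtain c where c: "c \<in> V n" "y = (\<lambda>i. 1 / ?b * ?S c i)" by blast
    then show "y \<in> V n" using V_scale[OF lin_V[OF Sl c(1)], of "1 / ?b"] by simp
  next
    fix x y assume xy: "x \<in> V n" "y \<in> V n"
    show "(\<lambda>i. 1 / ?b * ?S (\<lambda>i. x i + y i) i) = (\<lambda>i. 1 / ?b * ?S x i + 1 / ?b * ?S y i)"
      using lin_add[OF Sl xy] by (simp add: distrib_left)
  next
    fix x c assume x: "x \<in> V n"
    show "(\<lambda>i. 1 / ?b * ?S (\<lambda>i. c * x i) i) = (\<lambda>i. c * (1 / ?b * ?S x i))"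
      using lin_scale[OF Sl x] by (simp add: algebra_simps)
  qed
  have "N (L c) \<le> l1norm n c \<and> l1norm n c \<le> (bm_dist_l1 n N + \<theta>) * N (L c)" if c: "c \<in> V n" for c
  proof
    have Sc: "?S c \<in> V n" using inv_props(3)[OF T c] .
    have NL: "N (L c) = N (?S c) / ?b" unfolding L_def using semi_scale[OF norm_semi[OF N] Sc, of "1/?b"] bpos by simp
    show "N (L c) \<le> l1norm n c" unfolding NL using f(4)[OF c] bpos by (simp add: field_simps)
    have "l1norm n c = l1norm n (T (?S c))" using inv_props(2)[OF T c] by simp
    also have "\<dots> \<le> ?a * N (?S c)" using f(3)[OF Sc] .
    also have "\<dots> = z * N (L c)" unfolding NL zT using bpos by simp
    also have "\<dots> \<le> (bm_dist_l1 n N + \<theta>) * N (L c)"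
      using z(2) semi_nonneg[OF norm_semi[OF N] lin_V[OF Ll c]] by (intro mult_right_mono) auto
    finally show "l1norm n c \<le> (bm_dist_l1 n N + \<theta>) * N (L c)" .
  qed
  then show "\<exists>L. linear_on n L \<and> (\<forall>c\<in>V n. N (L c) \<le> l1norm n c \<and> l1norm n c \<le> (bm_dist_l1 n N + \<theta>) * N (L c))"
    using Ll by blast
qed



definition Hn :: "nat \<Rightarrow> (nat \<Rightarrow> real) \<Rightarrow> real" where
  "Hn m p = (\<Sum>i<m. - p i * ln (p i))"

definition smplx :: "nat \<Rightarrow> (nat \<Rightarrow> real) set" where
  "smplx m = {p. p \<in> V m \<and> (\<forall>i. 0 \<le> p i) \<and> (\<Sum>i<m. p i) = 1}"

lemma ent_term: assumes w: "0 \<le> (w::real)" and k: "0 < k" shows "- w * ln w \<le> w * ln k + 1 / k - w"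
proof (cases "w = 0")
  case True then show ?thesis using k by (simp add: less_imp_le)
next
  case False
  then have wp: "w > 0" using w by simp
  have "ln (1 / (k * w)) \<le> 1 / (k * w) - 1" using wp k by (intro ln_le_minus_one) simp
  moreover have "ln (1 / (k * w)) = - ln k - ln w" using wp k by (simp add: ln_div ln_mult)
  ultimately have "- ln k - ln w \<le> 1 / (k * w) - 1" by simp
  then have mono: "w * (- ln k - ln w) \<le> w * (1 / (k * w) - 1)" using wp by (intro mult_left_mono) auto
  have e1: "w * (1 / (k * w) - 1) = 1 / k - w" using wp k by (simp add: field_simps)
  have "- w * ln w = w * (- ln k - ln w) + w * ln k" by (simp add: algebra_simps)
  then show ?thesis using mono e1 by linarith
qed

lemma gibbs:
  fixes w :: "nat \<Rightarrow> real"
  assumes I: "finite I" "card I = k" "0 < k" and w: "\<And>i. i \<in> I \<Longrightarrow> 0 \<le> w i" and s: "(\<Sum>i\<in>I. w i) = 1"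
  shows "(\<Sum>i\<in>I. - w i * ln (w i)) \<le> ln k"
proof -
  have "(\<Sum>i\<in>I. - w i * ln (w i)) \<le> (\<Sum>i\<in>I. w i * ln k + 1 / k - w i)"
  proof (rule sum_mono)
    fix i assume "i \<in> I"
    show "- w i * ln (w i) \<le> w i * ln k + 1 / k - w i" using ent_term[OF w[OF \<open>i \<in> I\<close>], of "real k"] I(3) by simp
  qed
  also have "\<dots> = (\<Sum>i\<in>I. w i) * ln k + real (card I) * (1 / k) - (\<Sum>i\<in>I. w i)"
    by (simp add: sum.distrib sum_subtractf sum_distrib_right)
  also have "\<dots> = ln k" using s I by simp
  finally show ?thesis .
qed

lemma smplx_le1: "p \<in> smplx m \<Longrightarrow> p i \<le> 1"
proof -
  assume p: "p \<in> smplx m"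
  show ?thesis
  proof (cases "i < m")
    case True
    have "p i \<le> (\<Sum>i<m. p i)" using p True unfolding smplx_def by (intro member_le_sum) auto
    then show ?thesis using p unfolding smplx_def by simp
  next
    case False then show ?thesis using p unfolding smplx_def V_def by auto
  qed
qed

lemma Hn_nonneg: "p \<in> smplx m \<Longrightarrow> 0 \<le> Hn m p"
  unfolding Hn_def
proof (rule sum_nonneg)
  fix i assume p: "p \<in> smplx m"
  have a: "0 \<le> p i" "p i \<le> 1" using p smplx_le1[OF p] unfolding smplx_def by auto
  show "0 \<le> - p i * ln (p i)"
  proof (cases "p i = 0")
    case False
    then have "ln (p i) \<le> 0" using a by simp
    then show ?thesis using a by (simp add: mult_nonneg_nonpos)
  qed simp
qed

lemma Hn_max: "p \<in> smplx m \<Longrightarrow> 0 < m \<Longrightarrow> Hn m p \<le> ln m"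
  unfolding Hn_def by (rule gibbs[of "{..<m}" m]) (auto simp: smplx_def)

lemma mix_term_upper:
  fixes a b t :: real
  assumes a: "0 \<le> a" "0 \<le> b" and t: "0 \<le> t" "t \<le> 1"
  shows "- (t * a + (1 - t) * b) * ln (t * a + (1 - t) * b) \<le> - (t * a) * ln (t * a) - ((1 - t) * b) * ln ((1 - t) * b)"
proof -
  let ?r = "t * a + (1 - t) * b"
  have h: "x * ln x \<le> x * ln ?r" if "0 \<le> x" "x \<le> ?r" for x
  proof (cases "x = 0")
    case False
    then have "ln x \<le> ln ?r" using that by (subst ln_le_cancel_iff) auto
    then show ?thesis using that by (simp add: mult_left_mono)
  qed simp
  have "(t * a) * ln (t * a) \<le> (t * a) * ln ?r" using a t by (intro h) (auto intro: mult_nonneg_nonneg)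
  moreover have "((1 - t) * b) * ln ((1 - t) * b) \<le> ((1 - t) * b) * ln ?r" using a t by (intro h) auto
  ultimately show ?thesis by (simp add: algebra_simps)
qed

lemma scaled_term: fixes t a :: real assumes "0 \<le> t" "0 \<le> a"
  shows "- (t * a) * ln (t * a) = t * (- a * ln a) - a * (t * ln t)"
proof (cases "t = 0 \<or> a = 0")
  case True then show ?thesis by auto
next
  case False
  have "t > 0" "a > 0" using assms False by auto
  then show ?thesis by (simp add: ln_mult algebra_simps)
qed

lemma smplx_mix: "p \<in> smplx m \<Longrightarrow> q \<in> smplx m \<Longrightarrow> 0 \<le> t \<Longrightarrow> t \<le> 1 \<Longrightarrow>
  (\<lambda>i. t * p i + (1 - t) * q i) \<in> smplx m"
  unfolding smplx_def V_def by (auto simp: sum.distrib sum_distrib_left[symmetric])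

lemma Hn_mix_upper:
  assumes p: "p \<in> smplx m" and q: "q \<in> smplx m" and t: "0 \<le> t" "t \<le> 1"
  shows "Hn m (\<lambda>i. t * p i + (1 - t) * q i) \<le> t * Hn m p + (1 - t) * Hn m q + ln 2"
proof -
  have pn: "\<And>i. 0 \<le> p i" and qn: "\<And>i. 0 \<le> q i" using p q unfolding smplx_def by auto
  have sp: "(\<Sum>i<m. p i) = 1" and sq: "(\<Sum>i<m. q i) = 1" using p q unfolding smplx_def by auto
  have "Hn m (\<lambda>i. t * p i + (1 - t) * q i) \<le> (\<Sum>i<m. - (t * p i) * ln (t * p i) - ((1 - t) * q i) * ln ((1 - t) * q i))"
    unfolding Hn_def by (intro sum_mono mix_term_upper pn qn t)
  also have "\<dots> = (\<Sum>i<m. (t * (- p i * ln (p i)) - p i * (t * ln t)) + ((1 - t) * (- q i * ln (q i)) - q i * ((1 - t) * ln (1 - t))))"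
    using scaled_term pn qn t by (intro sum.cong) auto
  also have "\<dots> = t * Hn m p + (1 - t) * Hn m q - (t * ln t) * (\<Sum>i<m. p i) - ((1 - t) * ln (1 - t)) * (\<Sum>i<m. q i)"
    unfolding Hn_def by (simp add: sum.distrib sum_subtractf sum_distrib_left sum_distrib_right sum_negf algebra_simps)
  also have "\<dots> = t * Hn m p + (1 - t) * Hn m q + (- t * ln t - (1 - t) * ln (1 - t))" using sp sq by simp
  also have "- t * ln t - (1 - t) * ln (1 - t) \<le> ln 2"
  proof -
    have "- t * ln t \<le> t * ln 2 + 1 / 2 - t" using ent_term[of t 2] t by simp
    moreover have "- (1 - t) * ln (1 - t) \<le> (1 - t) * ln 2 + 1 / 2 - (1 - t)" using ent_term[of "1 - t" 2] t by simp
    ultimately show ?thesis by (simp add: algebra_simps)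
  qed
  finally show ?thesis by simp
qed

lemma mix_term_lower:
  fixes a b t :: real
  assumes a: "0 \<le> a" "0 \<le> b" and t: "0 \<le> t" "t \<le> 1"
  shows "(t * a + (1 - t) * b) * ln (t * a + (1 - t) * b) \<le> t * (a * ln a) + (1 - t) * (b * ln b)"
proof -
  let ?r = "t * a + (1 - t) * b"
  show ?thesis
  proof (cases "?r = 0")
    case True
    have nn: "0 \<le> t * a" "0 \<le> (1 - t) * b" using a t by auto
    have "t * a = 0" using True nn by linarith
    moreover have "(1 - t) * b = 0" using True nn by linarith
    ultimately have z: "t * (a * ln a) = 0" "(1 - t) * (b * ln b) = 0" by auto
    have "?r * ln ?r = 0" using True by simp
    then show ?thesis using z by linarith
  next
    case False
    then have rp: "?r > 0" using a t by (metis add_nonneg_nonneg diff_ge_0_iff_ge less_eq_real_def mult_nonneg_nonneg)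
    have h: "x * ln x \<ge> x * ln ?r - ?r + x" if "0 \<le> x" for x
    proof (cases "x = 0")
      case True then show ?thesis using rp by simp
    next
      case False
      then have xp: "x > 0" using that by simp
      have "ln (?r / x) \<le> ?r / x - 1" using xp rp by (intro ln_le_minus_one) simp
      then have "ln ?r - ln x \<le> ?r / x - 1" using xp rp by (simp add: ln_div)
      then have mono: "x * (ln ?r - ln x) \<le> x * (?r / x - 1)" using xp by (intro mult_left_mono) auto
      have e: "x * (ln ?r - ln x) = x * ln ?r - x * ln x" by (simp add: right_diff_distrib)
      have e2: "x * (?r / x - 1) = ?r - x" using xp by (simp add: field_simps)
      show ?thesis using mono e e2 by linarith
    qed
    have "t * (a * ln a) + (1 - t) * (b * ln b) \<ge> t * (a * ln ?r - ?r + a) + (1 - t) * (b * ln ?r - ?r + b)"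
      using h[OF a(1)] h[OF a(2)] t by (intro add_mono mult_left_mono) auto
    moreover have "t * (a * ln ?r - ?r + a) + (1 - t) * (b * ln ?r - ?r + b) = ?r * ln ?r"
      by (simp add: algebra_simps)
    ultimately show ?thesis by simp
  qed
qed

lemma Hn_mix_lower:
  assumes p: "p \<in> smplx m" and q: "q \<in> smplx m" and t: "0 \<le> t" "t \<le> 1"
  shows "t * Hn m p + (1 - t) * Hn m q \<le> Hn m (\<lambda>i. t * p i + (1 - t) * q i)"
proof -
  have pn: "\<And>i. 0 \<le> p i" and qn: "\<And>i. 0 \<le> q i" using p q unfolding smplx_def by auto
  define r where "r = (\<lambda>i. t * p i + (1 - t) * q i)"
  have A: "(\<Sum>i<m. r i * ln (r i)) \<le> (\<Sum>i<m. t * (p i * ln (p i)) + (1 - t) * (q i * ln (q i)))"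
    unfolding r_def by (intro sum_mono mix_term_lower pn qn t)
  have B: "Hn m r = - (\<Sum>i<m. r i * ln (r i))" unfolding Hn_def by (simp add: sum_negf)
  have C: "t * Hn m p + (1 - t) * Hn m q = - (\<Sum>i<m. t * (p i * ln (p i)) + (1 - t) * (q i * ln (q i)))"
    unfolding Hn_def by (simp add: sum_negf sum.distrib sum_distrib_left)
  show ?thesis using A B C unfolding r_def[symmetric] by linarith
qed

lemma cont_term:
  fixes p m :: real
  assumes p: "0 \<le> p" and m: "1 \<le> m" "p * m \<le> m"
  shows "p * ln (m * p) \<le> (p - 1 / m) + \<bar>p - 1 / m\<bar> * (ln m + 1)"
proof -
  let ?x = "m * p"
  have mp: "m > 0" using m by simp
  show ?thesis
  proof (cases "?x \<ge> 1")
    case True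
    have x0: "?x > 0" using True by simp
    have "ln ?x \<le> ?x - 1" using x0 by (rule ln_le_minus_one)
    moreover have "ln ?x \<le> ln m" using x0 m by (simp add: mult.commute)
    moreover have "ln m \<ge> 0" using m by simp
    ultimately have "?x * ln ?x \<le> (?x - 1) + (?x - 1) * (ln m + 1)"
    proof -
      assume a: "ln ?x \<le> ?x - 1" "ln ?x \<le> ln m" "ln m \<ge> 0"
      have "?x * ln ?x = ln ?x + (?x - 1) * ln ?x" by (simp add: algebra_simps)
      also have "\<dots> \<le> (?x - 1) + (?x - 1) * ln m" using a True by (intro add_mono mult_left_mono) auto
      also have "\<dots> \<le> (?x - 1) + (?x - 1) * (ln m + 1)" using True by (intro add_mono mult_left_mono) auto
      finally show ?thesis .
    qed
    then have key: "?x * ln ?x \<le> (?x - 1) + (?x - 1) * (ln m + 1)" .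
    have pm: "p - 1 / m \<ge> 0" using True mp by (simp add: field_simps)
    have "p * ln (m * p) = (?x * ln ?x) / m" using mp by simp
    also have "\<dots> \<le> ((?x - 1) + (?x - 1) * (ln m + 1)) / m" by (rule divide_right_mono[OF key]) (use mp in simp)
    also have "\<dots> = (p - 1 / m) + (p - 1 / m) * (ln m + 1)" using mp by (simp add: field_simps)
    finally show ?thesis using pm by simp
  next
    case False
    have pl0: "p * ln (m * p) \<le> 0"
    proof (cases "p = 0")
      case False
      then have "ln (m * p) \<le> 0" using p mp \<open>\<not> ?x \<ge> 1\<close> by simp
      then show ?thesis using p by (simp add: mult_nonneg_nonpos)
    qed simp
    have pm: "p \<le> 1 / m" using False mp by (simp add: field_simps)
    have lm: "ln m \<ge> 0" using m by simp
    have h1: "p * ln m \<le> (1 / m) * ln m" using pm lm by (rule mult_right_mono)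
    have ab: "\<bar>p - 1 / m\<bar> = 1 / m - p" using pm by simp
    have h2: "(p - 1 / m) + (1 / m - p) * (ln m + 1) = (1 / m) * ln m - p * ln m" by (simp add: algebra_simps)
    show ?thesis unfolding ab h2 using pl0 h1 by linarith
  qed
qed

lemma Hn_cont:
  assumes p: "p \<in> smplx m" and m: "0 < m"
  shows "ln m - Hn m p \<le> (ln m + 1) * (\<Sum>i<m. \<bar>p i - 1 / m\<bar>)"
proof -
  have pn: "\<And>i. 0 \<le> p i" and sp: "(\<Sum>i<m. p i) = 1" using p unfolding smplx_def by auto
  have eq: "ln m - Hn m p = (\<Sum>i<m. p i * ln (m * p i))"
  proof -
    have "ln m - Hn m p = ln m * (\<Sum>i<m. p i) + (\<Sum>i<m. p i * ln (p i))" using sp unfolding Hn_def by (simp add: sum_negf)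
    also have "\<dots> = (\<Sum>i<m. p i * ln (m * p i))"
      unfolding sum_distrib_left sum.distrib[symmetric]
    proof (rule sum.cong)
      fix i assume "i \<in> {..<m}"
      show "ln m * p i + p i * ln (p i) = p i * ln (m * p i)"
      proof (cases "p i = 0")
        case False then have "p i > 0" using pn[of i] by simp
        then show ?thesis using m by (simp add: ln_mult algebra_simps)
      qed simp
    qed simp
    finally show ?thesis .
  qed
  have "(\<Sum>i<m. p i * ln (m * p i)) \<le> (\<Sum>i<m. (p i - 1 / m) + \<bar>p i - 1 / m\<bar> * (ln m + 1))"
  proof (rule sum_mono)
    fix i assume "i \<in> {..<m}"
    have "p i \<le> 1" using smplx_le1[OF p] .
    then have "p i * m \<le> m" using m by (simp add: mult_le_cancel_right1)
    then show "p i * ln (m * p i) \<le> (p i - 1 / m) + \<bar>p i - 1 / m\<bar> * (ln m + 1)"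
      using cont_term[OF pn[of i], of m] m by simp
  qed
  also have "\<dots> = (ln m + 1) * (\<Sum>i<m. \<bar>p i - 1 / m\<bar>)"
    using sp m by (simp add: sum.distrib sum_subtractf sum_distrib_left mult.commute)
  finally show ?thesis using eq by simp
qed



lemma birkhoff:
  assumes N: "is_norm_on n N" and n2: "2 \<le> n" and Ll: "linear_on n L"
    and hL2: "\<And>c. c \<in> V n \<Longrightarrow> l1norm n c \<le> D * N (L c)" and Dp: "0 < D" and eta: "0 < \<eta>"
  shows "\<exists>y'. y' \<in> V n \<and> N y' = 1 \<and> (\<forall>w\<in>V (n - 1). \<forall>s. \<bar>s\<bar> \<le> (1 + \<eta>) * N (\<lambda>i. s * y' i + L w i))"
proof -
  let ?m = "n - 1"
  let ?e = "ev (n - 1)"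
  have sn: "seminorm_on n N" using norm_semi[OF N] .
  have Vm: "\<And>w. w \<in> V ?m \<Longrightarrow> w \<in> V n" using V_mono[of ?m n] by simp
  have eV: "?e \<in> V n" using V_ev n2 by simp
  have cV: "\<And>w. w \<in> V ?m \<Longrightarrow> (\<lambda>i. ?e i + w i) \<in> V n" using V_add[OF eV] Vm by blast
  define X where "X = {N (L (\<lambda>i. ?e i + w i)) | w. w \<in> V ?m}"
  have lowX: "1 / D \<le> x" if xX: "x \<in> X" for x
  proof -
    obtain w where w: "w \<in> V ?m" "x = N (L (\<lambda>i. ?e i + w i))" using xX X_def by blast
    have "w (n - 1) = 0" using w(1) by (simp add: V_def)
    then have "1 \<le> \<bar>?e (n - 1) + w (n - 1)\<bar>" by (simp add: ev_def)
    also have "\<dots> \<le> l1norm n (\<lambda>i. ?e i + w i)" unfolding l1norm_def using n2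
      by (intro member_le_sum[where f = "\<lambda>i. \<bar>?e i + w i\<bar>"]) auto
    also have "\<dots> \<le> D * x" using hL2[OF cV[OF w(1)]] w(2) by simp
    finally show ?thesis using Dp by (simp add: field_simps)
  qed
  have z0: "(\<lambda>i. 0::real) \<in> V ?m" by (rule V_zero)
  have Xne: "X \<noteq> {}" using z0 X_def by blast
  have bddX: "bdd_below X" using lowX by (meson bdd_below.I)
  define \<rho> where "\<rho> = Inf X"
  have rho: "1 / D \<le> \<rho>" unfolding \<rho>_def using lowX Xne by (intro cInf_greatest) auto
  have rpos: "\<rho> > 0" using rho Dp by (meson less_le_trans zero_less_divide_1_iff)
  have "Inf X < (1 + \<eta>) * \<rho>" using rpos eta \<rho>_def by simp
  then obtain x where x: "x \<in> X" "x < (1 + \<eta>) * \<rho>" using cInf_lessD[OF Xne] by blast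
  then obtain ws where ws: "ws \<in> V ?m" "x = N (L (\<lambda>i. ?e i + ws i))" using X_def by blast
  define y0 where "y0 = L (\<lambda>i. ?e i + ws i)"
  define \<nu> where "\<nu> = N y0"
  have nu1: "\<rho> \<le> \<nu>" unfolding \<nu>_def y0_def \<rho>_def using cInf_lower[OF x(1) bddX] ws by simp
  have nu2: "\<nu> < (1 + \<eta>) * \<rho>" unfolding \<nu>_def y0_def using x ws by simp
  have nupos: "\<nu> > 0" using nu1 rpos by simp
  have y0V: "y0 \<in> V n" unfolding y0_def using lin_V[OF Ll cV[OF ws(1)]] .
  define y' where "y' = (\<lambda>i. (1 / \<nu>) * y0 i)"
  have y'V: "y' \<in> V n" unfolding y'_def using V_scale[OF y0V] .
  have Ny': "N y' = 1" unfolding y'_def using semi_scale[OF sn y0V, of "1/\<nu>"] nupos \<nu>_def by simp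
  have main: "\<bar>s\<bar> \<le> (1 + \<eta>) * N (\<lambda>i. s * y' i + L w i)" if w: "w \<in> V ?m" for w s
  proof (cases "s = 0")
    case True
    then show ?thesis using semi_nonneg[OF sn lin_V[OF Ll Vm[OF w]]] eta by simp
  next
    case False
    define w2 where "w2 = (\<lambda>i. ws i + (\<nu> / s) * w i)"
    have w2V: "w2 \<in> V ?m" unfolding w2_def using V_add[OF ws(1) V_scale[OF w]] .
    have "L (\<lambda>i. ?e i + w2 i) = L (\<lambda>i. (?e i + ws i) + (\<nu> / s) * w i)"
      unfolding w2_def by (simp add: add.assoc)
    also have "\<dots> = (\<lambda>i. y0 i + L (\<lambda>i. (\<nu> / s) * w i) i)"
      unfolding y0_def using lin_add[OF Ll cV[OF ws(1)] V_scale[OF Vm[OF w]]] .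
    also have "\<dots> = (\<lambda>i. y0 i + (\<nu> / s) * L w i)" unfolding lin_scale[OF Ll Vm[OF w], of "\<nu> / s"] ..
    finally have Le: "L (\<lambda>i. ?e i + w2 i) = (\<lambda>i. y0 i + (\<nu> / s) * L w i)" .
    have vec: "(\<lambda>i. s * y' i + L w i) = (\<lambda>i. (s / \<nu>) * L (\<lambda>i. ?e i + w2 i) i)"
      unfolding Le y'_def using False nupos by (auto simp: field_simps)
    have "N (\<lambda>i. s * y' i + L w i) = \<bar>s / \<nu>\<bar> * N (L (\<lambda>i. ?e i + w2 i))"
      unfolding vec using semi_scale[OF sn lin_V[OF Ll cV[OF w2V]]] .
    moreover have "\<rho> \<le> N (L (\<lambda>i. ?e i + w2 i))"
      unfolding \<rho>_def using w2V X_def by (intro cInf_lower[OF _ bddX]) blast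
    ultimately have "\<bar>s\<bar> / \<nu> * \<rho> \<le> N (\<lambda>i. s * y' i + L w i)"
      using nupos by (simp add: abs_div mult_left_mono divide_right_mono)
    moreover have "\<bar>s\<bar> \<le> (1 + \<eta>) * (\<bar>s\<bar> / \<nu> * \<rho>)"
    proof -
      have "\<nu> \<le> (1 + \<eta>) * \<rho>" using nu2 by simp
      then have "\<bar>s\<bar> * \<nu> \<le> \<bar>s\<bar> * ((1 + \<eta>) * \<rho>)" by (intro mult_left_mono) auto
      then show ?thesis using nupos by (simp add: field_simps)
    qed
    ultimately show ?thesis using eta
      by (meson less_eq_real_def mult_left_mono order_trans add_pos_pos zero_less_one)
  qed
  show ?thesis using y'V Ny' main by blast
qed



lemma ln2_pos: "0 < ln (2::real)" by simp

lemma Hb_bounds: assumes p: "p \<in> smplx m" and m: "0 < m"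
  shows "0 \<le> Hn m p / ln 2" "Hn m p / ln 2 \<le> log 2 m"
proof -
  show "0 \<le> Hn m p / ln 2" using Hn_nonneg[OF p] by simp
  have "Hn m p \<le> ln m" using Hn_max[OF p m] .
  then show "Hn m p / ln 2 \<le> log 2 m" unfolding log_def by (simp add: divide_right_mono)
qed

lemma Hb_cont: assumes p: "p \<in> smplx m" and m: "0 < m"
  shows "log 2 m - Hn m p / ln 2 \<le> (log 2 m + 2) * (\<Sum>i<m. \<bar>p i - 1 / m\<bar>)"
proof -
  let ?s = "\<Sum>i<m. \<bar>p i - 1 / m\<bar>"
  have s0: "0 \<le> ?s" by (simp add: sum_nonneg)
  have "ln m - Hn m p \<le> (ln m + 1) * ?s" using Hn_cont[OF p m] .
  then have "(ln m - Hn m p) / ln 2 \<le> ((ln m + 1) * ?s) / ln 2" by (simp add: divide_right_mono)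
  moreover have "(ln m - Hn m p) / ln 2 = log 2 m - Hn m p / ln 2" unfolding log_def by (simp add: diff_divide_distrib)
  moreover have "((ln m + 1) * ?s) / ln 2 = (log 2 m + 1 / ln 2) * ?s" unfolding log_def by (simp add: field_simps)
  moreover have "1 / ln 2 \<le> (2::real)"
  proof -
    have "2/3 \<le> ln (2::real)" by (rule ln2_ge_two_thirds)
    then show ?thesis by (simp add: field_simps)
  qed
  then have "(log 2 m + 1 / ln 2) * ?s \<le> (log 2 m + 2) * ?s" using s0 by (intro mult_right_mono) auto
  ultimately show ?thesis by linarith
qed

lemma ev_smplx: "k < m \<Longrightarrow> ev k \<in> smplx m"
  unfolding smplx_def using V_ev[of k m] by (auto simp: ev_def)

lemma Hn_ev: "Hn m (ev k) = 0"
  unfolding Hn_def ev_def by (intro sum.neutral) auto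

lemma smplx_V: "p \<in> smplx m \<Longrightarrow> p \<in> V m" by (simp add: smplx_def)

lemma main_bounds:
  fixes n :: nat and N L y' and D S \<eta> :: real
  assumes N: "is_norm_on n N" and n2: "2 \<le> n" and Ll: "linear_on n L"
    and hL1o: "\<forall>c\<in>V n. N (L c) \<le> l1norm n c"
    and hL2o: "\<forall>c\<in>V n. l1norm n c \<le> D * N (L c)" and Dp: "0 < D" and Sp: "0 < S" and eta: "0 < \<eta>"
    and y'V: "y' \<in> V n" and Ny': "N y' = 1"
    and birko: "\<forall>w\<in>V (n - 1). \<forall>s. \<bar>s\<bar> \<le> (1 + \<eta>) * N (\<lambda>i. s * y' i + L w i)"
    and m_def: "m = n - 1"
    and H_def: "H = (\<lambda>p. Hn m p / ln 2)"
    and a_def: "a = (\<lambda>p i. S * L p i - H p * y' i)"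
    and u_def: "u = (\<lambda>i. if i < m then 1 / real m else 0)"
    and z0_def: "z0 = (\<lambda>i. S * L u i)"
  shows "a ` smplx m \<subseteq> V n"
    and "approx_convex N (a ` smplx m)"
    and "z0 \<in> conv_hull (a ` smplx m)"
    and "\<And>p. p \<in> smplx m \<Longrightarrow> H p / (1 + \<eta>) \<le> N (\<lambda>i. z0 i - a p i)"
    and "\<And>p. p \<in> smplx m \<Longrightarrow> S * l1norm n (\<lambda>i. u i - p i) / D - H p \<le> N (\<lambda>i. z0 i - a p i)"
    and "\<And>p. p \<in> smplx m \<Longrightarrow> H p \<ge> log 2 m - (log 2 m + 2) * l1norm n (\<lambda>i. u i - p i)"
    and "\<And>p q. p \<in> smplx m \<Longrightarrow> q \<in> smplx m \<Longrightarrow> N (\<lambda>i. a p i - a q i) \<le> 2 * S + log 2 m"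
    and "\<And>p. p \<in> smplx m \<Longrightarrow> 0 \<le> H p \<and> H p \<le> log 2 m"
proof -
  have hL1: "\<And>c. c \<in> V n \<Longrightarrow> N (L c) \<le> l1norm n c" using hL1o by blast
  have hL2: "\<And>c. c \<in> V n \<Longrightarrow> l1norm n c \<le> D * N (L c)" using hL2o by blast
  have birk: "\<And>w s. w \<in> V (n - 1) \<Longrightarrow> \<bar>s\<bar> \<le> (1 + \<eta>) * N (\<lambda>i. s * y' i + L w i)" using birko by blast
  have sn: "seminorm_on n N" using norm_semi[OF N] .
  have mpos: "0 < m" and mn: "m \<le> n" using n2 unfolding m_def by auto
  have sV: "\<And>p. p \<in> smplx m \<Longrightarrow> p \<in> V n" using smplx_V V_mono[OF mn] by blast
  have Hb: "\<And>p. p \<in> smplx m \<Longrightarrow> 0 \<le> H p \<and> H p \<le> log 2 m" unfolding H_def using Hb_bounds mpos by blast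
  then show "\<And>p. p \<in> smplx m \<Longrightarrow> 0 \<le> H p \<and> H p \<le> log 2 m" .
  have aV: "a p \<in> V n" if "p \<in> smplx m" for p
    unfolding a_def using V_diff[OF V_scale[OF lin_V[OF Ll sV[OF that]]] V_scale[OF y'V]] .
  show "a ` smplx m \<subseteq> V n" using aV by blast
  show "approx_convex N (a ` smplx m)"
    unfolding approx_convex_def
  proof (intro ballI allI impI)
    fix x y and t :: real assume x: "x \<in> a ` smplx m" and y: "y \<in> a ` smplx m" and t: "0 \<le> t \<and> t \<le> 1"
    obtain p where p: "p \<in> smplx m" "x = a p" using x by blast
    obtain q where q: "q \<in> smplx m" "y = a q" using y by blast
    define r where "r = (\<lambda>i. t * p i + (1 - t) * q i)"
    have r: "r \<in> smplx m" unfolding r_def using smplx_mix p(1) q(1) t by blast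
    have Lr: "L r = (\<lambda>i. t * L p i + (1 - t) * L q i)" unfolding r_def using lin_comb[OF Ll sV[OF p(1)] sV[OF q(1)]] .
    define \<delta> where "\<delta> = H r - (t * H p + (1 - t) * H q)"
    have d0: "0 \<le> \<delta>"
    proof -
      have "t * Hn m p + (1 - t) * Hn m q \<le> Hn m r" unfolding r_def using Hn_mix_lower[OF p(1) q(1)] t by blast
      then have "(t * Hn m p + (1 - t) * Hn m q) / ln 2 \<le> Hn m r / ln 2" by (simp add: divide_right_mono)
      moreover have "(t * Hn m p + (1 - t) * Hn m q) / ln 2 = t * H p + (1 - t) * H q"
        unfolding H_def by (simp add: add_divide_distrib)
      ultimately show ?thesis unfolding \<delta>_def H_def by linarith
    qed
    have d1: "\<delta> \<le> 1"
    proof -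
      have "Hn m r \<le> t * Hn m p + (1 - t) * Hn m q + ln 2" unfolding r_def using Hn_mix_upper[OF p(1) q(1)] t by blast
      then have "Hn m r / ln 2 \<le> (t * Hn m p + (1 - t) * Hn m q + ln 2) / ln 2" by (simp add: divide_right_mono)
      also have "\<dots> = t * H p + (1 - t) * H q + 1" unfolding H_def by (simp add: field_simps)
      finally show ?thesis unfolding \<delta>_def H_def by simp
    qed
    let ?z = "\<lambda>i. t * x i + (1 - t) * y i"
    have diff: "(\<lambda>i. ?z i - a r i) = (\<lambda>i. \<delta> * y' i)"
      unfolding p(2) q(2) a_def Lr \<delta>_def by (simp add: algebra_simps)
    have "N (\<lambda>i. ?z i - a r i) = \<bar>\<delta>\<bar>" unfolding diff using semi_scale[OF sn y'V, of "\<delta>"] Ny' by simp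
    then have le1: "N (\<lambda>i. ?z i - a r i) \<le> 1" using d0 d1 by simp
    have zV: "?z \<in> V n" using V_add[OF V_scale[OF aV[OF p(1)]] V_scale[OF aV[OF q(1)]]] p q by simp
    have bdd: "bdd_below {N (\<lambda>i. ?z i - b i) |b. b \<in> a ` smplx m}"
    proof (rule bdd_belowI)
      fix v assume "v \<in> {N (\<lambda>i. ?z i - b i) |b. b \<in> a ` smplx m}"
      then obtain b where b: "b \<in> a ` smplx m" "v = N (\<lambda>i. ?z i - b i)" by blast
      have "b \<in> V n" using b(1) aV by blast
      then show "0 \<le> v" using b(2) semi_nonneg[OF sn V_diff[OF zV]] by simp
    qed
    have mem: "N (\<lambda>i. ?z i - a r i) \<in> {N (\<lambda>i. ?z i - b i) |b. b \<in> a ` smplx m}" using r by blast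
    show "setdist_N N ?z (a ` smplx m) \<le> 1"
      unfolding setdist_N_def by (rule cInf_lower2[OF mem le1 bdd])
  qed
  have injL: "c = (\<lambda>i. 0)" if c: "c \<in> V n" "L c = (\<lambda>i. 0)" for c :: "nat \<Rightarrow> real"
  proof -
    have "l1norm n c \<le> D * N (L c)" using hL2[OF c(1)] .
    also have "\<dots> = 0" using c(2) semi_zero[OF sn] by simp
    finally have "l1norm n c = 0" using l1_nonneg[of n c] by simp
    then show ?thesis using l1_zero[OF c(1)] by simp
  qed
  have aev: "a (ev k) = (\<lambda>i. S * L (ev k) i)" for k unfolding a_def H_def Hn_ev by simp
  have inj: "inj_on (\<lambda>k. a (ev k)) {..<m}"
  proof (rule inj_onI)
    fix k k' assume k: "k \<in> {..<m}" "k' \<in> {..<m}" and e: "a (ev k) = a (ev k')"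
    have kV: "ev k \<in> V n" "ev k' \<in> V n" using k mn V_ev by auto
    have e2: "(\<lambda>i. S * L (ev k) i) = (\<lambda>i. S * L (ev k') i)" using e by (simp only: aev)
    have "L (ev k) = L (ev k')"
    proof
      fix i
      have "S * L (ev k) i = S * L (ev k') i" using fun_cong[OF e2, of i] by simp
      then show "L (ev k) i = L (ev k') i" using Sp by simp
    qed
    then have "L (\<lambda>i. ev k i - ev k' i) = (\<lambda>i. 0)" using lin_diff[OF Ll kV] by simp
    then have "(\<lambda>i. ev k i - ev k' i) = (\<lambda>i. 0)" using injL V_diff[OF kV] by blast
    then have "ev k k - ev k' k = 0" by (rule fun_cong)
    then show "k = k'" by (simp add: ev_def split: if_splits)
  qed
  show "z0 \<in> conv_hull (a ` smplx m)"
    unfolding conv_hull_def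
  proof (intro CollectI exI conjI)
    let ?P = "(\<lambda>k. a (ev k)) ` {..<m}"
    show "finite ?P" by simp
    show "?P \<noteq> {}" using mpos by auto
    show "?P \<subseteq> a ` smplx m" using ev_smplx by auto
    show "\<forall>x\<in>?P. 0 \<le> (\<lambda>_. 1 / real m) x" by simp
    have cP: "card ?P = m" using card_image[OF inj] by simp
    show "sum (\<lambda>_. 1 / real m) ?P = 1" using cP mpos by simp
    have uexp: "u = (\<lambda>i. \<Sum>k<m. (1 / real m) * ev k i)"
      unfolding u_def ev_def by (auto simp: if_distrib sum.delta cong: if_cong)
    have evs: "(\<lambda>i. (1 / real m) * ev k i) \<in> V n" if "k \<in> {..<m}" for k
    proof -
      have "k < n" using that mn by simp
      then show ?thesis using V_scale[OF V_ev] by blast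
    qed
    have "L u = (\<lambda>i. \<Sum>k<m. L (\<lambda>i. (1 / real m) * ev k i) i)"
      unfolding uexp by (rule lin_sum[OF Ll finite_lessThan evs])
    also have "\<dots> = (\<lambda>i. \<Sum>k<m. (1 / real m) * L (ev k) i)"
    proof (intro ext sum.cong refl)
      fix i k assume "k \<in> {..<m}"
      then have "k < n" using mn by simp
      show "L (\<lambda>i. (1 / real m) * ev k i) i = (1 / real m) * L (ev k) i"
        unfolding lin_scale[OF Ll V_ev[OF \<open>k < n\<close>]] ..
    qed
    finally have Lu: "L u = (\<lambda>i. \<Sum>k<m. (1 / real m) * L (ev k) i)" .
    show "z0 = (\<lambda>j. \<Sum>x\<in>?P. (\<lambda>_. 1 / real m) x * x j)"
    proof
      fix j
      have "(\<Sum>x\<in>?P. 1 / real m * x j) = (\<Sum>k<m. 1 / real m * a (ev k) j)"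
        using sum.reindex[OF inj, of "\<lambda>x. 1 / real m * x j"] by simp
      also have "\<dots> = S * L u j" unfolding Lu aev by (simp add: sum_distrib_left algebra_simps)
      finally show "z0 j = (\<Sum>x\<in>?P. (\<lambda>_. 1 / real m) x * x j)" unfolding z0_def by simp
    qed
  qed
  have uV: "u \<in> V m" unfolding u_def V_def by simp
  have diffz: "(\<lambda>i. z0 i - a p i) = (\<lambda>i. H p * y' i + L (\<lambda>i. S * (u i - p i)) i)" if p: "p \<in> smplx m" for p
  proof -
    have "L (\<lambda>i. S * (u i - p i)) = (\<lambda>i. S * (L u i - L p i))"
      using lin_scale[OF Ll V_diff[OF V_mono[OF mn uV] sV[OF p]], of S] lin_diff[OF Ll V_mono[OF mn uV] sV[OF p]] by simp
    then show ?thesis unfolding z0_def a_def by (auto simp: algebra_simps)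
  qed
  have wV: "(\<lambda>i. S * (u i - p i)) \<in> V (n - 1)" if p: "p \<in> smplx m" for p
    using V_scale[OF V_diff[OF uV smplx_V[OF p]]] m_def by simp
  show "H p / (1 + \<eta>) \<le> N (\<lambda>i. z0 i - a p i)" if p: "p \<in> smplx m" for p
  proof -
    have "\<bar>H p\<bar> \<le> (1 + \<eta>) * N (\<lambda>i. z0 i - a p i)" unfolding diffz[OF p] using birk[OF wV[OF p]] .
    then show ?thesis using eta Hb[OF p] by (simp add: field_simps)
  qed
  show "S * l1norm n (\<lambda>i. u i - p i) / D - H p \<le> N (\<lambda>i. z0 i - a p i)" if p: "p \<in> smplx m" for p
  proof -
    have cV: "(\<lambda>i. S * (u i - p i)) \<in> V n" using V_mono[OF mn] V_scale[OF V_diff[OF uV smplx_V[OF p]]] by blast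
    have "l1norm n (\<lambda>i. S * (u i - p i)) = S * l1norm n (\<lambda>i. u i - p i)"
      using semi_scale[OF l1_semi V_diff[OF V_mono[OF mn uV] sV[OF p]], of S] Sp by simp
    then have "S * l1norm n (\<lambda>i. u i - p i) \<le> D * N (L (\<lambda>i. S * (u i - p i)))"
      using hL2[OF cV] by simp
    then have "S * l1norm n (\<lambda>i. u i - p i) / D \<le> N (L (\<lambda>i. S * (u i - p i)))"
      using Dp by (simp add: pos_divide_le_eq mult.commute)
    moreover have "N (L (\<lambda>i. S * (u i - p i))) - N (\<lambda>i. - H p * y' i) \<le> N (\<lambda>i. z0 i - a p i)"
      unfolding diffz[OF p] using semi_rev[OF sn lin_V[OF Ll cV] V_scale[OF y'V, of "- H p"]]
      by (simp add: add.commute)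
    moreover have "N (\<lambda>i. - H p * y' i) = H p" using semi_scale[OF sn y'V, of "- H p"] Ny' Hb[OF p] by simp
    ultimately show ?thesis by linarith
  qed
  show "H p \<ge> log 2 m - (log 2 m + 2) * l1norm n (\<lambda>i. u i - p i)" if p: "p \<in> smplx m" for p
  proof -
    have "l1norm n (\<lambda>i. u i - p i) = (\<Sum>i<m. \<bar>p i - 1 / m\<bar>)"
    proof -
      have "l1norm n (\<lambda>i. u i - p i) = (\<Sum>i<m. \<bar>u i - p i\<bar>)"
        unfolding l1norm_def
      proof (rule sum.mono_neutral_right)
        show "\<forall>i\<in>{..<n} - {..<m}. \<bar>u i - p i\<bar> = 0" using smplx_V[OF p] by (auto simp: u_def V_def)
      qed (use mn in auto)
      also have "\<dots> = (\<Sum>i<m. \<bar>p i - 1 / m\<bar>)" unfolding u_def by (intro sum.cong) (auto simp: abs_minus_commute)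
      finally show ?thesis .
    qed
    then show ?thesis using Hb_cont[OF p mpos] unfolding H_def by simp
  qed
  show "N (\<lambda>i. a p i - a q i) \<le> 2 * S + log 2 m" if p: "p \<in> smplx m" and q: "q \<in> smplx m" for p q
  proof -
    have pqV: "(\<lambda>i. p i - q i) \<in> V n" using V_diff[OF sV[OF p] sV[OF q]] .
    have cV: "(\<lambda>i. S * (p i - q i)) \<in> V n" using V_scale[OF pqV] .
    have Le: "L (\<lambda>i. S * (p i - q i)) = (\<lambda>i. S * (L p i - L q i))"
      using lin_scale[OF Ll pqV, of S] lin_diff[OF Ll sV[OF p] sV[OF q]] by simp
    have vec: "(\<lambda>i. a p i - a q i) = (\<lambda>i. L (\<lambda>i. S * (p i - q i)) i + (H q - H p) * y' i)"
      unfolding Le a_def by (auto simp: algebra_simps)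
    have "N (\<lambda>i. a p i - a q i) \<le> N (L (\<lambda>i. S * (p i - q i))) + N (\<lambda>i. (H q - H p) * y' i)"
      unfolding vec by (rule semi_add[OF sn lin_V[OF Ll cV] V_scale[OF y'V]])
    also have "N (\<lambda>i. (H q - H p) * y' i) = \<bar>H q - H p\<bar>" using semi_scale[OF sn y'V] Ny' by simp
    also have "\<bar>H q - H p\<bar> \<le> log 2 m" using Hb[OF p] Hb[OF q] by linarith
    also have "N (L (\<lambda>i. S * (p i - q i))) \<le> l1norm n (\<lambda>i. S * (p i - q i))" using hL1[OF cV] .
    also have "l1norm n (\<lambda>i. S * (p i - q i)) = S * l1norm n (\<lambda>i. p i - q i)"
      using semi_scale[OF l1_semi pqV, of S] Sp by simp
    also have "l1norm n (\<lambda>i. p i - q i) \<le> 2"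
    proof -
      have "l1norm n (\<lambda>i. p i - q i) \<le> l1norm n p + l1norm n q" using semi_diff[OF l1_semi sV[OF p] sV[OF q]] .
      moreover have "l1norm n p = 1" if "p \<in> smplx m" for p
      proof -
        have "l1norm n p = (\<Sum>i<m. \<bar>p i\<bar>)"
          unfolding l1norm_def
          by (rule sum.mono_neutral_right) (use mn smplx_V[OF that] in \<open>auto simp: V_def\<close>)
        also have "\<dots> = 1" using that unfolding smplx_def by simp
        finally show ?thesis .
      qed
      ultimately show ?thesis using p q by simp
    qed
    finally show ?thesis using Sp by (simp add: mult_left_mono)
  qed
qed



lemma log_pred:
  fixes n :: nat and \<epsilon> :: real
  assumes n: "2 \<le> n" and e: "0 < \<epsilon>" and big: "8 / \<epsilon> \<le> real n - 1"
  shows "log 2 (real n) - \<epsilon> / 4 \<le> log 2 (real (n - 1))"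
proof -
  have n1: "real (n - 1) = real n - 1" using n by (simp add: of_nat_diff)
  have p1: "real n - 1 > 0" using n by simp
  have p0: "real n > 0" using n by simp
  have lnd: "ln (real n / (real n - 1)) = ln (real n) - ln (real n - 1)" using p0 p1 by (rule ln_divide_pos)
  have "log 2 (real n) - log 2 (real n - 1) = ln (real n / (real n - 1)) / ln 2"
    unfolding log_def lnd by (rule diff_divide_distrib[symmetric])
  also have "ln (real n / (real n - 1)) \<le> real n / (real n - 1) - 1"
    using p1 p0 by (intro ln_le_minus_one) simp
  also have "real n / (real n - 1) - 1 = 1 / (real n - 1)" using p1 by (simp add: field_simps)
  finally have a: "log 2 (real n) - log 2 (real n - 1) \<le> (1 / (real n - 1)) / ln 2" by (simp add: divide_right_mono)
  have h: "1 / ln 2 \<le> (3/2::real)"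
  proof -
    have "2/3 \<le> ln (2::real)" by (rule ln2_ge_two_thirds)
    then show ?thesis by (simp add: field_simps)
  qed
  have "(1 / (real n - 1)) / ln 2 = (1 / (real n - 1)) * (1 / ln 2)" by simp
  also have "\<dots> \<le> (1 / (real n - 1)) * (3/2)" using h p1 by (intro mult_left_mono) auto
  finally have b: "(1 / (real n - 1)) / ln 2 \<le> (1 / (real n - 1)) * (3/2)" .
  have pp: "0 < (real n - 1) * (8 / \<epsilon>)" using p1 e by simp
  have c0: "1 / (real n - 1) \<le> 1 / (8 / \<epsilon>)" by (rule divide_left_mono[OF big _ pp]) simp
  have c1: "1 / (8 / \<epsilon>) = \<epsilon> / 8" by simp
  have c: "1 / (real n - 1) \<le> \<epsilon> / 8" using c0 c1 by linarith
  have d: "(1 / (real n - 1)) * (3/2) \<le> (\<epsilon> / 8) * (3/2)" using c by (rule mult_right_mono) simp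
  have "log 2 (real n) - log 2 (real n - 1) \<le> (\<epsilon> / 8) * (3/2)" using a b d by linarith
  then show ?thesis unfolding n1 using e by linarith
qed

theorem theorem4p1:
  fixes \<epsilon> :: real
  assumes "0 < \<epsilon>" and "\<epsilon> < 3"
  shows "\<exists>n0::nat. \<forall>n\<ge>n0. \<forall>N. is_norm_on n N \<longrightarrow>
           (\<exists>A. A \<subseteq> V n \<and> approx_convex N A \<and>
                hausdorff_N N A (conv_hull A) \<ge> ereal (log 2 (real n) - \<epsilon>) \<and>
                diam_N N A \<le> ereal (25 / \<epsilon> * (log 2 (real n))\<^sup>2 * bm_dist_l1 n N))"
proof -
  have e: "0 < \<epsilon>" "\<epsilon> < 3" using assms by auto
  define n0 where "n0 = 512 + nat \<lceil>8 / \<epsilon>\<rceil>"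
  have "\<forall>n\<ge>n0. \<forall>N. is_norm_on n N \<longrightarrow>
           (\<exists>A. A \<subseteq> V n \<and> approx_convex N A \<and>
                hausdorff_N N A (conv_hull A) \<ge> ereal (log 2 (real n) - \<epsilon>) \<and>
                diam_N N A \<le> ereal (25 / \<epsilon> * (log 2 (real n))\<^sup>2 * bm_dist_l1 n N))"
  proof (intro allI impI)
    fix n :: nat and N assume nn0: "n0 \<le> n" and N: "is_norm_on n N"
    have n512: "512 \<le> n" using nn0 n0_def by simp
    have n2: "2 \<le> n" and npos: "0 < n" using n512 by auto
    have big: "8 / \<epsilon> \<le> real n - 1"
    proof -
      have "8 / \<epsilon> \<le> real (nat \<lceil>8 / \<epsilon>\<rceil>)" by linarith
      also have "\<dots> \<le> real n - 1" using nn0 n0_def by simp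
      finally show ?thesis .
    qed
    define d where "d = bm_dist_l1 n N"
    have d1: "1 \<le> d" unfolding d_def using bm_good(1)[OF N npos zero_less_one] by simp
    obtain L where Ll: "linear_on n L"
      and hL: "\<And>c. c \<in> V n \<Longrightarrow> N (L c) \<le> l1norm n c \<and> l1norm n c \<le> (d + d / 4) * N (L c)"
    proof -
      have th: "0 < d / 4" using d1 by simp
      show ?thesis using bm_good(2)[OF N npos th] that unfolding d_def by blast
    qed
    define D where "D = d + d / 4"
    have Dp: "0 < D" using d1 D_def by simp
    define L2 where "L2 = log 2 (real n)"
    have L29: "9 \<le> L2"
    proof -
      have e9: "log 2 ((2::real) ^ 9) = 9" using log_pow_cancel[of "2::real" 9] by simp
      have "(2::real) ^ 9 \<le> real n" using n512 by simp
      then have "log 2 ((2::real) ^ 9) \<le> log 2 (real n)" by (subst log_le_cancel_iff) auto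
      then show ?thesis unfolding L2_def e9 .
    qed
    define \<eta> where "\<eta> = \<epsilon> / (2 * L2)"
    define \<eta>0 where "\<eta>0 = \<epsilon> / (4 * (L2 + 2))"
    define S where "S = 2 * D * L2 / \<eta>0"
    have etap: "0 < \<eta>" unfolding \<eta>_def using e L29 by simp
    have eta0p: "0 < \<eta>0" unfolding \<eta>0_def using e L29 by simp
    have Sp: "0 < S" unfolding S_def using Dp L29 eta0p by simp
    obtain y' where y'V: "y' \<in> V n" and Ny': "N y' = 1"
      and birk: "\<forall>w\<in>V (n - 1). \<forall>s. \<bar>s\<bar> \<le> (1 + \<eta>) * N (\<lambda>i. s * y' i + L w i)"
      using birkhoff[OF N n2 Ll _ Dp etap] hL unfolding D_def by blast
    define m where "m = n - 1"
    define H where "H = (\<lambda>p. Hn m p / ln 2)"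
    define a where "a = (\<lambda>p i. S * L p i - H p * y' i)"
    define u where "u = (\<lambda>i. if i < m then 1 / real m else 0)"
    define z0 where "z0 = (\<lambda>i. S * L u i)"
    have hL1: "\<forall>c\<in>V n. N (L c) \<le> l1norm n c" using hL by blast
    have hL2: "\<forall>c\<in>V n. l1norm n c \<le> D * N (L c)" using hL D_def by blast
    have birk': "\<forall>w\<in>V (n - 1). \<forall>s. \<bar>s\<bar> \<le> (1 + \<eta>) * N (\<lambda>i. s * y' i + L w i)" using birk by blast
    note mb = main_bounds[OF N n2 Ll hL1 hL2 Dp Sp etap y'V Ny' birk' m_def H_def a_def u_def z0_def]
    define A where "A = a ` smplx m"
    have mpos: "0 < m" using n2 m_def by simp
    have logm: "log 2 (real m) \<le> L2" unfolding L2_def m_def using mpos m_def by simp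
    have logm2: "L2 - \<epsilon> / 4 \<le> log 2 (real m)" unfolding L2_def m_def using log_pred[OF n2 e(1) big] .
    have dist: "L2 - \<epsilon> \<le> N (\<lambda>i. z0 i - a p i)" if p: "p \<in> smplx m" for p
    proof (cases "\<eta>0 \<le> l1norm n (\<lambda>i. u i - p i)")
      case True
      have "S * \<eta>0 / D \<le> S * l1norm n (\<lambda>i. u i - p i) / D"
        using True Sp Dp by (simp add: divide_right_mono)
      moreover have "S * \<eta>0 / D = 2 * L2" unfolding S_def using eta0p Dp by simp
      moreover have "H p \<le> log 2 (real m)" using mb(8)[OF p] by simp
      ultimately have "2 * L2 - log 2 (real m) \<le> N (\<lambda>i. z0 i - a p i)" using mb(5)[OF p] by linarith
      then show ?thesis using logm e by linarith
    next
      case False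
      have l0: "0 \<le> l1norm n (\<lambda>i. u i - p i)" by (rule l1_nonneg)
      have "(log 2 (real m) + 2) * l1norm n (\<lambda>i. u i - p i) \<le> (L2 + 2) * \<eta>0"
        using False l0 logm mb(8)[OF p] by (intro mult_mono) auto
      also have "(L2 + 2) * \<eta>0 = \<epsilon> / 4"
      proof -
        have nz: "4 * L2 + 8 > 0" using L29 by simp
        show ?thesis unfolding \<eta>0_def using nz by (simp add: field_simps)
      qed
      finally have "H p \<ge> L2 - \<epsilon> / 2" using mb(6)[OF p] logm2 by linarith
      moreover have "(1 + \<eta>) * (L2 - \<epsilon>) \<le> L2 - \<epsilon> / 2"
      proof -
        have "\<eta> * L2 = \<epsilon> / 2" unfolding \<eta>_def using L29 by simp
        moreover have "0 \<le> \<eta> * \<epsilon>" using etap e by simp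
        ultimately show ?thesis by (simp add: algebra_simps)
      qed
      ultimately have "(1 + \<eta>) * (L2 - \<epsilon>) \<le> H p" by linarith
      then have "L2 - \<epsilon> \<le> H p / (1 + \<eta>)" using etap by (simp add: field_simps)
      then show ?thesis using mb(4)[OF p] by linarith
    qed
    have diam: "2 * S + log 2 (real m) \<le> 25 / \<epsilon> * L2\<^sup>2 * d"
    proof -
      have "2 * S = 20 * d * L2 * (L2 + 2) / \<epsilon>" unfolding S_def \<eta>0_def D_def using e L29 by (simp add: field_simps)
      moreover have "20 * d * L2 * (L2 + 2) / \<epsilon> + L2 \<le> 25 / \<epsilon> * L2\<^sup>2 * d"
      proof -
        have "40 * d + \<epsilon> \<le> 5 * d * L2"
        proof -
          have "45 * d \<le> 5 * d * L2" using L29 d1 by simp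
          then show ?thesis using d1 e by linarith
        qed
        then have "L2 * (40 * d + \<epsilon>) \<le> L2 * (5 * d * L2)" using L29 by (intro mult_left_mono) auto
        then have "20 * d * L2 * (L2 + 2) + L2 * \<epsilon> \<le> 25 * L2\<^sup>2 * d" by (simp add: power2_eq_square algebra_simps)
        then have "(20 * d * L2 * (L2 + 2) + L2 * \<epsilon>) / \<epsilon> \<le> (25 * L2\<^sup>2 * d) / \<epsilon>" using e by (simp add: divide_right_mono)
        then show ?thesis using e by (simp add: field_simps)
      qed
      ultimately show ?thesis using logm by linarith
    qed
    show "\<exists>A. A \<subseteq> V n \<and> approx_convex N A \<and>
                hausdorff_N N A (conv_hull A) \<ge> ereal (log 2 (real n) - \<epsilon>) \<and>
                diam_N N A \<le> ereal (25 / \<epsilon> * (log 2 (real n))\<^sup>2 * bm_dist_l1 n N)"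
    proof (intro exI conjI)
      show "A \<subseteq> V n" unfolding A_def using mb(1) .
      show "approx_convex N A" unfolding A_def using mb(2) .
      have "ereal (L2 - \<epsilon>) \<le> esetdist_N N z0 A"
        unfolding esetdist_N_def A_def
      proof (rule INF_greatest)
        fix b assume "b \<in> a ` smplx m"
        then obtain p where "p \<in> smplx m" "b = a p" by blast
        then show "ereal (L2 - \<epsilon>) \<le> ereal (N (\<lambda>i. z0 i - b i))" using dist by simp
      qed
      also have "esetdist_N N z0 A \<le> (SUP b\<in>conv_hull A. esetdist_N N b A)"
        using mb(3) unfolding A_def by (intro SUP_upper) auto
      also have "\<dots> \<le> hausdorff_N N A (conv_hull A)" unfolding hausdorff_N_def by simp
      finally show "hausdorff_N N A (conv_hull A) \<ge> ereal (log 2 (real n) - \<epsilon>)" unfolding L2_def .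
      show "diam_N N A \<le> ereal (25 / \<epsilon> * (log 2 (real n))\<^sup>2 * bm_dist_l1 n N)"
        unfolding diam_N_def
      proof (rule SUP_least)
        fix pr assume "pr \<in> A \<times> A"
        then obtain p q where p: "p \<in> smplx m" and q: "q \<in> smplx m" and pr: "pr = (a p, a q)" unfolding A_def by blast
        have "N (\<lambda>i. fst pr i - snd pr i) \<le> 2 * S + log 2 (real m)" using mb(7)[OF p q] pr by simp
        also have "\<dots> \<le> 25 / \<epsilon> * (log 2 (real n))\<^sup>2 * bm_dist_l1 n N" using diam unfolding L2_def d_def .
        finally show "ereal (N (\<lambda>i. fst pr i - snd pr i)) \<le> ereal (25 / \<epsilon> * (log 2 (real n))\<^sup>2 * bm_dist_l1 n N)" by simp
      qed
    qed
  qed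
  then show ?thesis by blast
qed


end
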